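(* For all $A,r\in\mathbb{N}$ and $\varepsilon>0$ there exists $N\in\mathbb{N}$ such that the following holds. Let $n_1,\ldots,n_r$ be positive integers with $n_i\leq An_j$ for all $i,j$ and $n=n_1+\cdots+n_r\geq N$; let $\Lambda=(\lambda_{i,j})$ be a symmetric non-negative $r\times r$ matrix that is $\varepsilon$-separated; let $p_{i,j}=\lambda_{i,j}/\sqrt{n_in_j}$, $M_{i,j}=p_{i,j}n_j$, and suppose $\rho(M)\geq 1+\varepsilon$. Let $Q=((n_j-n^{0.999})p_{i,j})_{i,j\in[r]}$. Then $\rho(Q)\geq 1+\varepsilon/2$; in particular, for every non-zero initial configuration $x$, the Galton–Watson process $\mathrm{GW}(\vec n-n^{0.999}\vec 1,P,x)$ is super-critical.
   Context: $\rho(\cdot)$ denotes the largest eigenvalue. $\Lambda$ is $\varepsilon$-separated if for all $i,j$ either $\lambda_{i,j}=0$ or $\varepsilon\leq\lambda_{i,j}\leq 1/\varepsilon$. $\mathrm{GW}(\vec m,P,x)$ is the multi-type Galton–Watson process in which each individual of type $i$ has, independently for each $j$, a $\mathrm{Binomial}(m_j,p_{i,j})$ number of children of type $j$; its mean offspring matrix is $(m_jp_{i,j})_{i,j}$, and it is called super-critical when the largest eigenvalue of this matrix exceeds $1$. *)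

theory Defs
  imports Complex_Main "Jordan_Normal_Form.Char_Poly"
begin

definition largest_eigenvalue :: "real mat \<Rightarrow> real" where
  "largest_eigenvalue A = Max {k. eigenvalue A k}"

definition eps_separated :: "nat \<Rightarrow> real \<Rightarrow> (nat \<Rightarrow> nat \<Rightarrow> real) \<Rightarrow> bool" where
  "eps_separated r \<epsilon> \<Lambda> \<longleftrightarrow>
     (\<forall>i<r. \<forall>j<r. \<Lambda> i j = 0 \<or> (\<epsilon> \<le> \<Lambda> i j \<and> \<Lambda> i j \<le> 1 / \<epsilon>))"

end

theory Submission
  imports Defs "Jordan_Normal_Form.Spectral_Radius" "HOL-Analysis.Function_Topology"
begin


lemma quad_zero:
  fixes a b :: real
  assumes "b \<ge> 0" and "\<forall>t. 2 * t * b + t^2 * a \<le> 0"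
  shows "b = 0"
proof (rule ccontr)
  assume "b \<noteq> 0"
  hence b: "b > 0" using assms(1) by simp
  define t where "t = b / (\<bar>a\<bar> + 1)"
  have d: "\<bar>a\<bar> + 1 > 0" by simp
  have tp: "t > 0" unfolding t_def using b d by simp
  have ta: "t * \<bar>a\<bar> \<le> b" unfolding t_def using b d
    by (simp add: field_simps)
  have "- (t * b) \<le> - (t * (t * \<bar>a\<bar>))" using ta tp by (simp add: mult_left_mono)
  also have "\<dots> \<le> t^2 * a"
    by (simp add: power2_eq_square abs_if mult_nonneg_nonneg)
  finally have "2 * t * b + t^2 * a \<ge> t * b" by linarith
  moreover have "t * b > 0" using tp b by simp
  ultimately show False using assms(2) by (smt (verit))
qed

lemma compact_T:
  fixes r :: nat
  shows "compact {z :: nat \<Rightarrow> real. (\<forall>i. z i \<in> (if i < r then {-1..1} else {0})) \<and> (\<Sum>i<r. (z i)^2) = 1}"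
proof -
  let ?B = "\<lambda>i::nat. if i < r then {-1..1::real} else {0}"
  have "compactin (product_topology (\<lambda>i. euclidean) UNIV) (PiE UNIV ?B)"
    by (subst compactin_PiE) auto
  hence c: "compact (PiE UNIV ?B)" by (simp add: euclidean_product_topology)
  have cl: "closed {z :: nat \<Rightarrow> real. (\<Sum>i<r. (z i)^2) = 1}"
    by (intro closed_Collect_eq continuous_on_sum continuous_on_power continuous_on_const) auto
  have "{z :: nat \<Rightarrow> real. (\<forall>i. z i \<in> ?B i) \<and> (\<Sum>i<r. (z i)^2) = 1} = PiE UNIV ?B \<inter> {z. (\<Sum>i<r. (z i)^2) = 1}"
    unfolding PiE_UNIV_domain Pi_def by blast
  thus ?thesis using compact_Int_closed[OF c cl] by simp
qed

lemma coord_cont[continuous_intros]: "continuous_on A (\<lambda>z::nat\<Rightarrow>real. z i)"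
  by (rule continuous_on_subset[OF continuous_on_product_coordinates]) auto

lemma rayleigh:
  fixes S :: "nat \<Rightarrow> nat \<Rightarrow> real" and r :: nat
  assumes sym: "\<And>i j. i < r \<Longrightarrow> j < r \<Longrightarrow> S i j = S j i" and r: "0 < r"
  shows "\<exists>lam x. (\<Sum>i<r. (x i)^2) = 1 \<and> (\<forall>i<r. (\<Sum>j<r. S i j * x j) = lam * x i) \<and>
     (\<forall>z. (\<Sum>i<r. \<Sum>j<r. S i j * z i * z j) \<le> lam * (\<Sum>i<r. (z i)^2))"
proof -
  define f where "f z = (\<Sum>i<r. \<Sum>j<r. S i j * z i * z j)" for z :: "nat \<Rightarrow> real"
  define nq where "nq z = (\<Sum>i<r. (z i)^2)" for z :: "nat \<Rightarrow> real"
  define T where "T = {z :: nat \<Rightarrow> real. (\<forall>i. z i \<in> (if i < r then {-1..1} else {0})) \<and> (\<Sum>i<r. (z i)^2) = 1}"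
  have cT: "compact T" unfolding T_def by (rule compact_T)
  define e0 where "e0 = (\<lambda>i::nat. if i = 0 then (1::real) else 0)"
  have "(\<Sum>i<r. (e0 i)^2) = (\<Sum>i<r. if i = 0 then 1 else 0)"
    by (rule sum.cong) (auto simp: e0_def)
  also have "\<dots> = 1" using r by simp
  finally have "e0 \<in> T" unfolding T_def using r by (auto simp: e0_def)
  hence Tne: "T \<noteq> {}" by auto
  have cf: "continuous_on T f" unfolding f_def by (intro continuous_intros)
  obtain x where xT: "x \<in> T" and xmax: "\<forall>y\<in>T. f y \<le> f x"
    using continuous_attains_sup[OF cT Tne cf] by blast
  define lam where "lam = f x"
  have nqx: "nq x = 1" using xT unfolding T_def nq_def by simp
  have bound: "f z \<le> lam * nq z" for z
  proof (cases "nq z = 0")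
    case True
    then have "\<forall>i<r. z i = 0" unfolding nq_def by (subst (asm) sum_nonneg_eq_0_iff) auto
    then have "f z = 0" unfolding f_def by simp
    thus ?thesis using True by simp
  next
    case False
    have "nq z \<ge> 0" unfolding nq_def by (simp add: sum_nonneg)
    hence pos: "nq z > 0" using False by simp
    define s where "s = sqrt (nq z)"
    have s: "s > 0" "s^2 = nq z" using pos s_def by auto
    define z' where "z' = (\<lambda>i. if i < r then z i / s else 0)"
    have "nq z' = (\<Sum>i<r. (z i)^2 / s^2)" unfolding nq_def z'_def
      by (rule sum.cong) (auto simp: power_divide)
    also have "\<dots> = nq z / s^2" by (simp add: nq_def sum_divide_distrib)
    also have "\<dots> = 1" using s pos by simp
    finally have nq': "nq z' = 1" .
    have "z' i \<in> (if i < r then {-1..1} else {0})" for i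
    proof (cases "i < r")
      case True
      have "(z i)^2 \<le> nq z" unfolding nq_def
        by (rule member_le_sum) (use True in auto)
      hence "(z i)^2 \<le> s^2" using s by simp
      hence "\<bar>z i\<bar> \<le> \<bar>s\<bar>" by (simp only: abs_le_square_iff)
      hence a1: "- s \<le> z i" "z i \<le> s" using s by arith+
      have "z i / s \<le> 1" using a1 s by (simp add: divide_le_eq)
      moreover have "- 1 \<le> z i / s" using a1 s by (simp add: le_divide_eq)
      ultimately show ?thesis using True unfolding z'_def by simp
    qed (simp add: z'_def)
    hence "z' \<in> T" using nq' unfolding T_def nq_def by auto
    hence le: "f z' \<le> lam" using xmax lam_def by auto
    have "f z' = (\<Sum>i<r. \<Sum>j<r. S i j * z i * z j / s^2)" unfolding f_def z'_def
      by (intro sum.cong refl) (simp add: power2_eq_square)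
    also have "\<dots> = f z / s^2" unfolding f_def by (simp add: sum_divide_distrib)
    finally have "f z / s^2 \<le> lam" using le by simp
    moreover have s2: "s^2 > 0" using s(1) by simp
    ultimately have "f z \<le> lam * s^2" by (simp add: pos_divide_le_eq mult.commute)
    thus ?thesis using s by simp
  qed
  define w where "w i = (\<Sum>j<r. S i j * x j) - lam * x i" for i
  have key: "2 * t * nq w + t^2 * (f w - lam * nq w) \<le> 0" for t
  proof -
    define y where "y i = x i + t * w i" for i
    have b: "f y \<le> lam * nq y" by (rule bound)
    have "\<forall>i j. S i j * y i * y j = S i j * x i * x j + t * (S i j * w i * x j) + t * (S i j * x i * w j) + t^2 * (S i j * w i * w j)"
      by (simp add: y_def algebra_simps power2_eq_square)
    hence e1: "f y = f x + t * (\<Sum>i<r. \<Sum>j<r. S i j * w i * x j) + t * (\<Sum>i<r. \<Sum>j<r. S i j * x i * w j) + t^2 * f w"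
      by (simp add: f_def sum.distrib sum_distrib_left)
    have e2: "(\<Sum>i<r. \<Sum>j<r. S i j * x i * w j) = (\<Sum>i<r. \<Sum>j<r. S i j * w i * x j)"
      by (subst sum.swap) (intro sum.cong refl, simp add: sym mult_ac)
    have e3: "(\<Sum>i<r. \<Sum>j<r. S i j * w i * x j) = (\<Sum>i<r. w i * (\<Sum>j<r. S i j * x j))"
      by (simp add: sum_distrib_left mult_ac)
    have "\<forall>i. (y i)^2 = (x i)^2 + 2*t*(w i * x i) + t^2 * (w i)^2"
      by (simp add: y_def power2_eq_square algebra_simps)
    hence e4: "nq y = nq x + 2 * t * (\<Sum>i<r. w i * x i) + t^2 * nq w"
      by (simp add: nq_def sum.distrib sum_distrib_left)
    have "(\<Sum>i<r. w i * (\<Sum>j<r. S i j * x j)) - lam * (\<Sum>i<r. w i * x i)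
        = (\<Sum>i<r. w i * ((\<Sum>j<r. S i j * x j) - lam * x i))"
      by (simp add: sum_distrib_left sum_subtractf right_diff_distrib mult.left_commute)
    also have "\<dots> = nq w" unfolding nq_def by (simp add: w_def power2_eq_square)
    finally have e5: "(\<Sum>i<r. w i * (\<Sum>j<r. S i j * x j)) - lam * (\<Sum>i<r. w i * x i) = nq w" .
    define A where "A = (\<Sum>i<r. w i * (\<Sum>j<r. S i j * x j))"
    define B where "B = (\<Sum>i<r. w i * x i)"
    have "f y - lam * nq y = (f x - lam * nq x) + 2 * t * (A - lam * B) + t^2 * (f w - lam * nq w)"
      unfolding e1 e4 e2 e3 A_def[symmetric] B_def[symmetric] by (simp add: algebra_simps)
    also have "\<dots> = 2 * t * nq w + t^2 * (f w - lam * nq w)"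
      using e5 nqx lam_def unfolding A_def B_def by simp
    finally show ?thesis using b by simp
  qed
  have "nq w \<ge> 0" unfolding nq_def by (simp add: sum_nonneg)
  hence "nq w = 0" using key by (intro quad_zero[where a = "f w - lam * nq w"]) auto
  hence "\<forall>i<r. w i = 0" unfolding nq_def by (subst (asm) sum_nonneg_eq_0_iff) auto
  hence eig: "\<forall>i<r. (\<Sum>j<r. S i j * x j) = lam * x i" unfolding w_def by simp
  show ?thesis
  proof (intro exI[of _ lam] exI[of _ x] conjI)
    show "(\<Sum>i<r. (x i)^2) = 1" using nqx unfolding nq_def .
    show "\<forall>i<r. (\<Sum>j<r. S i j * x j) = lam * x i" using eig .
    show "\<forall>z. (\<Sum>i<r. \<Sum>j<r. S i j * z i * z j) \<le> lam * (\<Sum>i<r. (z i)^2)"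
    proof
      fix z show "(\<Sum>i<r. \<Sum>j<r. S i j * z i * z j) \<le> lam * (\<Sum>i<r. (z i)^2)"
        using bound[of z] unfolding f_def nq_def .
    qed
  qed
qed

lemma eig_vec:
  fixes f :: "nat \<Rightarrow> nat \<Rightarrow> real"
  assumes ev: "\<forall>i<r. (\<Sum>j<r. f i j * q j) = k * q i" and i0: "i0 < r" "q i0 \<noteq> 0"
  shows "eigenvalue (mat r r (\<lambda>(i,j). f i j)) k"
proof -
  let ?A = "mat r r (\<lambda>(i,j). f i j)"
  have ix: "(?A *\<^sub>v vec r q) $ i = (\<Sum>j\<in>{0..<r}. f i j * q j)" if "i < r" for i
    using that by (simp add: scalar_prod_def)
  have "eigenvector ?A (vec r q) k"
    unfolding eigenvector_def
  proof (intro conjI)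
    show "vec r q \<in> carrier_vec (dim_row ?A)" by simp
    show "vec r q \<noteq> 0\<^sub>v (dim_row ?A)"
    proof
      assume "vec r q = 0\<^sub>v (dim_row ?A)"
      hence "vec r q $ i0 = 0\<^sub>v r $ i0" by simp
      thus False using i0 by simp
    qed
    show "?A *\<^sub>v vec r q = k \<cdot>\<^sub>v vec r q"
    proof (rule eq_vecI)
      fix i assume "i < dim_vec (k \<cdot>\<^sub>v vec r q)"
      hence i: "i < r" by simp
      show "(?A *\<^sub>v vec r q) $ i = (k \<cdot>\<^sub>v vec r q) $ i"
        using ix[OF i] ev i by (simp add: lessThan_atLeast0)
    qed simp
  qed
  thus ?thesis unfolding eigenvalue_def by blast
qed

lemma sym_eig:
  fixes p :: "nat \<Rightarrow> nat \<Rightarrow> real" and c :: "nat \<Rightarrow> real" and f :: "nat \<Rightarrow> nat \<Rightarrow> real"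
  assumes r: "0 < r" and sym: "\<And>i j. i < r \<Longrightarrow> j < r \<Longrightarrow> p i j = p j i"
    and c: "\<And>i. i < r \<Longrightarrow> c i > 0" and f: "\<And>i j. i < r \<Longrightarrow> j < r \<Longrightarrow> f i j = c j * p i j"
  shows "\<exists>k. eigenvalue (mat r r (\<lambda>(i,j). f i j)) k \<and>
    (\<forall>y. (\<Sum>i<r. \<Sum>j<r. sqrt (c i) * p i j * sqrt (c j) * y i * y j) \<le> k * (\<Sum>i<r. (y i)^2))"
proof -
  define S where "S i j = sqrt (c i) * p i j * sqrt (c j)" for i j
  have "\<And>i j. i < r \<Longrightarrow> j < r \<Longrightarrow> S i j = S j i" unfolding S_def using sym by (simp add: mult_ac)
  then obtain lam x where nx: "(\<Sum>i<r. (x i)^2) = 1"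
    and ev: "\<forall>i<r. (\<Sum>j<r. S i j * x j) = lam * x i"
    and bd: "\<forall>z. (\<Sum>i<r. \<Sum>j<r. S i j * z i * z j) \<le> lam * (\<Sum>i<r. (z i)^2)"
    using rayleigh[of r S] r by blast
  have "\<exists>i<r. x i \<noteq> 0"
  proof (rule ccontr)
    assume "\<not> (\<exists>i<r. x i \<noteq> 0)"
    hence "\<forall>i<r. x i = 0" by auto
    hence "(\<Sum>i<r. (x i)^2) = 0" by simp
    with nx show False by simp
  qed
  then obtain i0 where i0: "i0 < r" "x i0 \<noteq> 0" by blast
  define q where "q j = x j / sqrt (c j)" for j
  have evq: "\<forall>i<r. (\<Sum>j<r. f i j * q j) = lam * q i"
  proof (intro allI impI)
    fix i assume i: "i < r"
    have ci: "sqrt (c i) > 0" using c i by simp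
    have "(\<Sum>j<r. f i j * q j) = (\<Sum>j<r. S i j * x j / sqrt (c i))"
    proof (rule sum.cong[OF refl])
      fix j assume "j \<in> {..<r}" hence j: "j < r" by simp
      have cj: "sqrt (c j) > 0" using c j by simp
      have "f i j * q j = (sqrt (c j) * sqrt (c j)) * p i j * x j / sqrt (c j)"
        using c[OF j] f[OF i j] by (simp add: q_def)
      also have "\<dots> = sqrt (c j) * p i j * x j" using cj by (simp add: field_simps)
      also have "\<dots> = S i j * x j / sqrt (c i)" using ci by (simp add: S_def field_simps)
      finally show "f i j * q j = S i j * x j / sqrt (c i)" .
    qed
    also have "\<dots> = (\<Sum>j<r. S i j * x j) / sqrt (c i)" by (simp add: sum_divide_distrib)
    also have "\<dots> = lam * q i" using ev i by (simp add: q_def)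
    finally show "(\<Sum>j<r. f i j * q j) = lam * q i" .
  qed
  have "q i0 \<noteq> 0" using i0 c[OF i0(1)] by (simp add: q_def)
  hence "eigenvalue (mat r r (\<lambda>(i,j). f i j)) lam" using evq i0(1) by (intro eig_vec) auto
  thus ?thesis using bd unfolding S_def by blast
qed

lemma Nexists:
  fixes K \<epsilon> :: real
  assumes K: "K \<ge> 0" and e: "\<epsilon> > 0"
  shows "\<exists>N::nat. N \<ge> 1 \<and> (\<forall>n. n \<ge> N \<longrightarrow> 2 * (1 + \<epsilon>) * K * (real n powr 0.999) \<le> \<epsilon> * real n)"
proof -
  define C where "C = 2 * (1 + \<epsilon>) * K / \<epsilon>"
  have C0: "C \<ge> 0" using K e by (simp add: C_def)
  define N where "N = nat \<lceil>C powr 1000\<rceil> + 1"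
  show ?thesis
  proof (intro exI[of _ N] conjI allI impI)
    show "N \<ge> 1" by (simp add: N_def)
    fix n :: nat assume nN: "N \<le> n"
    have npos: "real n > 0" using nN N_def by simp
    have "real (nat \<lceil>C powr 1000\<rceil>) \<le> real n" using nN N_def by simp
    hence "C powr 1000 \<le> real n" using real_nat_ceiling_ge[of "C powr 1000"] by linarith
    hence "(C powr 1000) powr 0.001 \<le> real n powr 0.001"
      by (intro powr_mono2) auto
    moreover have "(C powr 1000) powr 0.001 = C" using C0 by (subst powr_powr) simp
    ultimately have Cn: "C \<le> real n powr 0.001" by simp
    have nn: "real n powr 0.001 * real n powr 0.999 = real n"
      using npos by (simp add: powr_add[symmetric])
    have "2 * (1 + \<epsilon>) * K = \<epsilon> * C" using e by (simp add: C_def)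
    hence "2 * (1 + \<epsilon>) * K * (real n powr 0.999) = \<epsilon> * C * (real n powr 0.999)" by simp
    also have "\<dots> \<le> \<epsilon> * (real n powr 0.001) * (real n powr 0.999)"
      using Cn e by (intro mult_right_mono mult_left_mono) auto
    also have "\<dots> = \<epsilon> * real n" using nn by (simp add: mult.assoc)
    finally show "2 * (1 + \<epsilon>) * K * (real n powr 0.999) \<le> \<epsilon> * real n" .
  qed
qed

lemma core:
  fixes ns :: "nat \<Rightarrow> nat" and p :: "nat \<Rightarrow> nat \<Rightarrow> real" and t \<epsilon> :: real
  assumes r: "0 < r" and pos: "\<forall>i<r. ns i > 0" and sym: "\<forall>i<r. \<forall>j<r. p i j = p j i"
    and ep: "\<epsilon> > 0" and tb: "\<forall>i<r. 2 * (1 + \<epsilon>) * t \<le> \<epsilon> * real (ns i)"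
    and hyp: "largest_eigenvalue (mat r r (\<lambda>(i,j). p i j * real (ns j))) \<ge> 1 + \<epsilon>"
  shows "largest_eigenvalue (mat r r (\<lambda>(i,j). (real (ns j) - t) * p i j)) \<ge> 1 + \<epsilon> / 2"
proof -
  define M where "M = mat r r (\<lambda>(i,j). p i j * real (ns j))"
  define Q where "Q = mat r r (\<lambda>(i,j). (real (ns j) - t) * p i j)"
  have finM: "finite {k. eigenvalue M k}"
    using card_finite_spectrum(1)[of M r] unfolding spectrum_def M_def by simp
  have finQ: "finite {k. eigenvalue Q k}"
    using card_finite_spectrum(1)[of Q r] unfolding spectrum_def Q_def by simp
  define c where "c j = real (ns j) - t" for j
  have cb: "(1 + \<epsilon>/2) * real (ns i) \<le> (1 + \<epsilon>) * c i" if i: "i < r" for i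
  proof -
    have h: "2 * (1 + \<epsilon>) * t \<le> \<epsilon> * real (ns i)" using tb i by blast
    have "(1 + \<epsilon>) * t \<le> \<epsilon> / 2 * real (ns i)" using h by linarith
    thus ?thesis unfolding c_def by (simp add: algebra_simps)
  qed
  have cpos: "c i > 0" if i: "i < r" for i
  proof -
    have "(1 + \<epsilon>/2) * real (ns i) > 0" using pos i ep by simp
    hence "(1 + \<epsilon>) * c i > 0" using cb[OF i] by linarith
    thus ?thesis using ep by (simp add: zero_less_mult_iff)
  qed
  obtain k0 where "eigenvalue M k0"
    using sym_eig[of r p "\<lambda>j. real (ns j)" "\<lambda>i j. p i j * real (ns j)"] r sym pos
    unfolding M_def by (auto simp: mult.commute)
  hence "{k. eigenvalue M k} \<noteq> {}" by auto
  hence "eigenvalue M (largest_eigenvalue M)"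
    unfolding largest_eigenvalue_def using finM Max_in by auto
  define \<mu> where "\<mu> = largest_eigenvalue M"
  have mu: "\<mu> \<ge> 1 + \<epsilon>" using hyp unfolding \<mu>_def M_def .
  obtain v where v: "v \<in> carrier_vec r" "v \<noteq> 0\<^sub>v r" "M *\<^sub>v v = \<mu> \<cdot>\<^sub>v v"
    using \<open>eigenvalue M (largest_eigenvalue M)\<close> unfolding eigenvalue_def eigenvector_def \<mu>_def M_def
    by auto
  have dv: "dim_vec v = r" using v(1) by simp
  have evM: "(\<Sum>j<r. p i j * real (ns j) * v $ j) = \<mu> * v $ i" if i: "i < r" for i
  proof -
    have "(M *\<^sub>v v) $ i = (\<mu> \<cdot>\<^sub>v v) $ i" using v(3) by simp
    thus ?thesis using i dv by (simp add: M_def scalar_prod_def lessThan_atLeast0)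
  qed
  have "\<exists>i<r. v $ i \<noteq> 0"
  proof (rule ccontr)
    assume "\<not> (\<exists>i<r. v $ i \<noteq> 0)"
    hence "v = 0\<^sub>v r" using dv by (intro eq_vecI) auto
    with v(2) show False by simp
  qed
  then obtain i0 where i0: "i0 < r" "v $ i0 \<noteq> 0" by blast
  define u where "u j = real (ns j) * v $ j" for j
  define y where "y j = u j / sqrt (c j)" for j
  define W where "W = (\<Sum>i<r. real (ns i) * (v $ i)^2)"
  have Wpos: "W > 0" unfolding W_def
    using i0 pos by (intro sum_pos2[of _ i0]) auto
  obtain lam where lamQ: "eigenvalue Q lam"
    and lb: "\<forall>y. (\<Sum>i<r. \<Sum>j<r. sqrt (c i) * p i j * sqrt (c j) * y i * y j) \<le> lam * (\<Sum>i<r. (y i)^2)"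
    using sym_eig[of r p c "\<lambda>i j. (real (ns j) - t) * p i j"] r sym cpos
    unfolding Q_def c_def by auto
  have su: "sqrt (c i) * y i = u i" if "i < r" for i
    using cpos[OF that] by (simp add: y_def)
  have "(\<Sum>i<r. \<Sum>j<r. sqrt (c i) * p i j * sqrt (c j) * y i * y j)
      = (\<Sum>i<r. \<Sum>j<r. u i * (p i j * real (ns j) * v $ j))"
  proof (intro sum.cong refl)
    fix i j assume "i \<in> {..<r}" "j \<in> {..<r}"
    hence ij: "i < r" "j < r" by auto
    have "sqrt (c i) * p i j * sqrt (c j) * y i * y j = (sqrt (c i) * y i) * p i j * (sqrt (c j) * y j)"
      by (simp add: mult_ac)
    also have "\<dots> = u i * (p i j * real (ns j) * v $ j)" using su[OF ij(1)] su[OF ij(2)]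
      by (simp add: u_def mult_ac)
    finally show "sqrt (c i) * p i j * sqrt (c j) * y i * y j = u i * (p i j * real (ns j) * v $ j)" .
  qed
  also have "\<dots> = (\<Sum>i<r. u i * (\<mu> * v $ i))"
    using evM by (simp add: sum_distrib_left[symmetric])
  also have "\<dots> = \<mu> * W" unfolding W_def u_def
    by (simp add: sum_distrib_left power2_eq_square mult_ac)
  finally have R: "(\<Sum>i<r. \<Sum>j<r. sqrt (c i) * p i j * sqrt (c j) * y i * y j) = \<mu> * W" .
  have Y: "(1 + \<epsilon>/2) * (\<Sum>i<r. (y i)^2) \<le> (1 + \<epsilon>) * W"
    unfolding W_def sum_distrib_left
  proof (rule sum_mono)
    fix i assume "i \<in> {..<r}" hence i: "i < r" by simp
    have ci: "c i > 0" using cpos[OF i] .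
    have "(y i)^2 = real (ns i) * (v $ i)^2 * real (ns i) / c i"
      using ci by (simp add: y_def u_def power_divide power_mult_distrib power2_eq_square)
    hence "(1 + \<epsilon>/2) * (y i)^2 = real (ns i) * (v $ i)^2 * ((1 + \<epsilon>/2) * real (ns i)) / c i"
      by simp
    also have "\<dots> \<le> real (ns i) * (v $ i)^2 * ((1 + \<epsilon>) * c i) / c i"
      using cb[OF i] ci by (intro divide_right_mono mult_left_mono) auto
    also have "\<dots> = (1 + \<epsilon>) * (real (ns i) * (v $ i)^2)" using ci by simp
    finally show "(1 + \<epsilon>/2) * (y i)^2 \<le> (1 + \<epsilon>) * (real (ns i) * (v $ i)^2)" .
  qed
  have Ypos: "(\<Sum>i<r. (y i)^2) > 0"
  proof -
    have "y i0 \<noteq> 0" using i0 pos cpos[OF i0(1)] by (simp add: y_def u_def)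
    thus ?thesis using i0 by (intro sum_pos2[of _ i0]) auto
  qed
  have "(1 + \<epsilon>/2) * (\<Sum>i<r. (y i)^2) \<le> (1 + \<epsilon>) * W" by (rule Y)
  also have "\<dots> \<le> \<mu> * W" using mu Wpos by (intro mult_right_mono) auto
  also have "\<dots> \<le> lam * (\<Sum>i<r. (y i)^2)" using spec[OF lb, of y] unfolding R .
  finally have "1 + \<epsilon>/2 \<le> lam" using Ypos by (simp add: mult_le_cancel_right_pos)
  also have "lam \<le> largest_eigenvalue Q"
    unfolding largest_eigenvalue_def using finQ lamQ by (intro Max_ge) auto
  finally show ?thesis unfolding Q_def .
qed

theorem claim3p2:
  fixes A r :: nat and \<epsilon> :: real
  assumes "\<epsilon> > 0"
  shows "\<exists>N::nat. \<forall>(ns :: nat \<Rightarrow> nat) (\<Lambda> :: nat \<Rightarrow> nat \<Rightarrow> real).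
     (\<forall>i<r. ns i > 0) \<longrightarrow>
     (\<forall>i<r. \<forall>j<r. ns i \<le> A * ns j) \<longrightarrow>
     (\<Sum>i<r. ns i) \<ge> N \<longrightarrow>
     (\<forall>i<r. \<forall>j<r. \<Lambda> i j = \<Lambda> j i) \<longrightarrow>
     (\<forall>i<r. \<forall>j<r. \<Lambda> i j \<ge> 0) \<longrightarrow>
     eps_separated r \<epsilon> \<Lambda> \<longrightarrow>
     (let n = (\<Sum>i<r. ns i);
          p = (\<lambda>i j. \<Lambda> i j / sqrt (real (ns i) * real (ns j)));
          M = mat r r (\<lambda>(i, j). p i j * real (ns j));
          Q = mat r r (\<lambda>(i, j). (real (ns j) - real n powr 0.999) * p i j)
      in largest_eigenvalue M \<ge> 1 + \<epsilon> \<longrightarrow> largest_eigenvalue Q \<ge> 1 + \<epsilon> / 2)"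
proof -
  define K where "K = real (r * A)"
  obtain N :: nat where N1: "N \<ge> 1"
    and N: "\<forall>n. n \<ge> N \<longrightarrow> 2 * (1 + \<epsilon>) * K * (real n powr 0.999) \<le> \<epsilon> * real n"
    using Nexists[of K \<epsilon>] assms unfolding K_def by auto
  show ?thesis
  proof (rule exI[of _ N], intro allI impI, unfold Let_def, intro impI)
    fix ns :: "nat \<Rightarrow> nat" and \<Lambda> :: "nat \<Rightarrow> nat \<Rightarrow> real"
    assume pos: "\<forall>i<r. ns i > 0" and rat: "\<forall>i<r. \<forall>j<r. ns i \<le> A * ns j"
      and big: "(\<Sum>i<r. ns i) \<ge> N"
      and sym: "\<forall>i<r. \<forall>j<r. \<Lambda> i j = \<Lambda> j i" and nn: "\<forall>i<r. \<forall>j<r. \<Lambda> i j \<ge> 0"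
      and sep: "eps_separated r \<epsilon> \<Lambda>"
      and hypM: "largest_eigenvalue (mat r r (\<lambda>(i, j). \<Lambda> i j / sqrt (real (ns i) * real (ns j)) * real (ns j))) \<ge> 1 + \<epsilon>"
    show "largest_eigenvalue (mat r r (\<lambda>(i, j). (real (ns j) - real (\<Sum>i<r. ns i) powr 0.999) * (\<Lambda> i j / sqrt (real (ns i) * real (ns j))))) \<ge> 1 + \<epsilon> / 2"
    proof -
      have r: "r > 0" using big N1 by (cases r) auto
      have "ns 0 \<le> A * ns 0" "ns 0 > 0" using rat pos r by auto
      hence A: "A > 0" by (cases A) auto
      have Kpos: "K > 0" unfolding K_def using r A by simp
      let ?n = "\<Sum>i<r. ns i"
      have nb: "real ?n \<le> K * real (ns i)" if i: "i < r" for i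
      proof -
        have "?n \<le> (\<Sum>j<r. A * ns i)" using rat i by (intro sum_mono) auto
        also have "\<dots> = r * A * ns i" by simp
        finally have "real ?n \<le> real (r * A * ns i)" by (rule of_nat_mono)
        thus ?thesis unfolding K_def by simp
      qed
      have tb: "\<forall>i<r. 2 * (1 + \<epsilon>) * (real ?n powr 0.999) \<le> \<epsilon> * real (ns i)"
      proof (intro allI impI)
        fix i assume i: "i < r"
        have "2 * (1 + \<epsilon>) * K * (real ?n powr 0.999) \<le> \<epsilon> * real ?n" using N big by blast
        also have "\<dots> \<le> \<epsilon> * (K * real (ns i))" using nb[OF i] assms by (intro mult_left_mono) auto
        finally have "(2 * (1 + \<epsilon>) * (real ?n powr 0.999)) * K \<le> (\<epsilon> * real (ns i)) * K"
          by (simp add: mult_ac)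
        thus "2 * (1 + \<epsilon>) * (real ?n powr 0.999) \<le> \<epsilon> * real (ns i)"
          using Kpos by (simp add: mult_le_cancel_right_pos)
      qed
      have symp: "\<forall>i<r. \<forall>j<r. \<Lambda> i j / sqrt (real (ns i) * real (ns j)) = \<Lambda> j i / sqrt (real (ns j) * real (ns i))"
        using sym by (simp add: mult.commute)
      show ?thesis
        by (rule core[of r ns "\<lambda>i j. \<Lambda> i j / sqrt (real (ns i) * real (ns j))" \<epsilon> "real ?n powr 0.999",
              OF r pos symp assms tb hypM])
    qed
  qed
qed

end
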